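(* There is an absolute constant $C>0$ such that the following holds. Let $q$ be a prime, let $\delta$ be a positive integer with $\delta\leq\frac{\log q}{\log 2}$, and let $n\geq\delta q$ be an integer. Let $A:=\frac{1}{n!}\sum_{\pi\in S_n}\bigl(c_1(\pi^q)\bigr)^{\delta}$. Then: if $\delta=1$, $A=\sigma_0(q)$; if $\delta=2$, $A=\sigma_1(q)+\sigma_0(q)^2$; if $\delta\geq3$, $\left|A-\sigma_{\delta-1}(q)-q^{\delta-2}\left(\delta+2^{\delta-1}-1\right)\right|\leq C\,3^{\delta}q^{\delta-3}$.
   Context: For $\pi\in S_n$, $c_1(\pi^q)$ is the number of fixed points of the permutation $\pi^q$. For real $\alpha$, $\sigma_\alpha(q)=\sum_{d\mid q}d^\alpha$. *)

theory Defs
  imports Complex_Main "HOL-Combinatorics.Permutations" "HOL-Computational_Algebra.Primes"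
begin

definition c1 :: "nat \<Rightarrow> (nat \<Rightarrow> nat) \<Rightarrow> nat" where
  "c1 n \<pi> = card {i \<in> {..<n}. \<pi> i = i}"

definition sigma :: "real \<Rightarrow> nat \<Rightarrow> real" where
  "sigma \<alpha> q = (\<Sum>d\<in>{d. d dvd q}. real d powr \<alpha>)"

definition momentA :: "nat \<Rightarrow> nat \<Rightarrow> nat \<Rightarrow> real" where
  "momentA n q \<delta> = (\<Sum>\<pi>\<in>{\<pi>. \<pi> permutes {..<n}}. real (c1 n (\<pi> ^^ q)) ^ \<delta>) / fact n"

end

theory Submission
  imports Defs "HOL-Combinatorics.Cycles" "HOL-Combinatorics.Stirling" "HOL-Real_Asymp.Real_Asymp"
begin

lemma cyc_pow:
  assumes "distinct cs" "i < length cs"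
  shows "(cycle_of_list cs ^^ k) (cs ! i) = cs ! ((i + k) mod length cs)"
proof -
  have "map (cycle_of_list cs ^^ k) cs = rotate k cs" using cyclic_rotation[OF assms(1)] .
  hence "(cycle_of_list cs ^^ k) (cs ! i) = rotate k cs ! i"
    by (metis assms(2) nth_map)
  also have "\<dots> = cs ! ((k + i) mod length cs)" using assms(2) by (simp add: nth_rotate)
  finally show ?thesis by (simp add: add.commute)
qed

lemma mod_shift_eq:
  fixes i k L :: nat
  assumes "i < L"
  shows "((i + k) mod L = i) \<longleftrightarrow> L dvd k"
  by (metis assms diff_add_inverse le_add1 mod_eq_dvd_iff_nat mod_less)

locale cdec =
  fixes A :: "'a set" and cs :: "'a list" and \<rho> :: "'a \<Rightarrow> 'a" and p :: "'a \<Rightarrow> 'a"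
  assumes dist: "distinct cs" and sub: "set cs \<subseteq> A"
    and rp: "\<rho> permutes (A - set cs)" and pdef: "p = cycle_of_list cs \<circ> \<rho>"
begin

lemma rho_C: "x \<in> set cs \<Longrightarrow> \<rho> x = x"
  using rp by (meson DiffD2 permutes_not_in)

lemma rho_notC: "x \<notin> set cs \<Longrightarrow> \<rho> x \<notin> set cs"
  using rp by (metis Diff_iff permutes_in_image permutes_not_in)

lemma pi_C: "x \<in> set cs \<Longrightarrow> p x = cycle_of_list cs x"
  by (simp add: pdef rho_C)

lemma pi_notC: "x \<notin> set cs \<Longrightarrow> p x = \<rho> x"
  using id_outside_supp[OF rho_notC] by (simp add: pdef)

lemma cycC: "x \<in> set cs \<Longrightarrow> cycle_of_list cs x \<in> set cs"
  using permutes_in_image[OF cycle_permutes[of cs]] by blast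

lemma powC: "x \<in> set cs \<Longrightarrow> (p ^^ k) x = (cycle_of_list cs ^^ k) x"
proof (induction k arbitrary: x)
  case 0 then show ?case by simp
next
  case (Suc k)
  have "(p ^^ Suc k) x = (p ^^ k) (p x)" by (simp only: funpow_Suc_right o_apply)
  also have "\<dots> = (cycle_of_list cs ^^ k) (cycle_of_list cs x)"
    using Suc by (simp add: pi_C cycC)
  also have "\<dots> = (cycle_of_list cs ^^ Suc k) x" by (simp only: funpow_Suc_right o_apply)
  finally show ?case .
qed

lemma pownotC: "x \<notin> set cs \<Longrightarrow> (p ^^ k) x = (\<rho> ^^ k) x"
proof (induction k arbitrary: x)
  case 0 then show ?case by simp
next
  case (Suc k)
  have "(p ^^ Suc k) x = (p ^^ k) (p x)" by (simp only: funpow_Suc_right o_apply)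
  also have "\<dots> = (\<rho> ^^ k) (\<rho> x)"
    using Suc by (simp add: pi_notC rho_notC)
  also have "\<dots> = (\<rho> ^^ Suc k) x" by (simp only: funpow_Suc_right o_apply)
  finally show ?case .
qed

lemma pow_nth: "i < length cs \<Longrightarrow> (p ^^ k) (cs ! i) = cs ! ((i + k) mod length cs)"
  using powC[of "cs ! i" k] cyc_pow[OF dist] by (metis nth_mem)

lemma pi_permutes: "p permutes A"
  unfolding pdef
proof (rule permutes_compose)
  show "\<rho> permutes A" using rp permutes_subset by blast
  show "cycle_of_list cs permutes A" using cycle_permutes permutes_subset sub by blast
qed

lemma least_power_pi:
  assumes ne: "cs \<noteq> []" shows "least_power p (hd cs) = length cs"
  unfolding least_power_def
proof (rule Least_equality)
  have h: "hd cs = cs ! 0" using ne by (simp add: hd_conv_nth)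
  have "(p ^^ length cs) (cs ! 0) = cs ! 0" using pow_nth[of 0 "length cs"] ne by simp
  then show "(p ^^ length cs) (hd cs) = hd cs \<and> length cs > 0" using h ne by simp
next
  fix k assume k: "(p ^^ k) (hd cs) = hd cs \<and> k > 0"
  have h: "hd cs = cs ! 0" using ne by (simp add: hd_conv_nth)
  show "length cs \<le> k"
  proof (rule ccontr)
    assume "\<not> length cs \<le> k"
    hence kl: "k < length cs" by simp
    have "(p ^^ k) (cs ! 0) = cs ! k" using pow_nth[of 0 k] kl ne by simp
    hence "cs ! k = cs ! 0" using k h by simp
    moreover have "(0::nat) < length cs" using kl by linarith
    ultimately show False using dist kl k nth_eq_iff_index_eq[OF dist, of k 0] by simp
  qed
qed

lemma support_pi:
  assumes ne: "cs \<noteq> []" shows "support p (hd cs) = cs"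
proof (rule nth_equalityI)
  show "length (support p (hd cs)) = length cs" by (simp add: least_power_pi ne)
  fix i assume "i < length (support p (hd cs))"
  hence i: "i < length cs" by (simp add: least_power_pi ne)
  have h: "hd cs = cs ! 0" using ne by (simp add: hd_conv_nth)
  have "support p (hd cs) ! i = (p ^^ i) (hd cs)" using i by (simp add: least_power_pi ne)
  also have "\<dots> = (p ^^ i) (cs ! 0)" using h by simp
  also have "\<dots> = cs ! i" using pow_nth[of 0 i] i ne by simp
  finally show "support p (hd cs) ! i = cs ! i" .
qed

lemma pi_C_iff:
  assumes x: "x \<in> set cs"
  shows "(p ^^ k) x = x \<longleftrightarrow> length cs dvd k"
proof -
  obtain i where i: "i < length cs" "x = cs ! i" using x by (metis in_set_conv_nth)
  have "(p ^^ k) x = cs ! ((i + k) mod length cs)" using pow_nth[of i k] i by simp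
  moreover have "(i + k) mod length cs < length cs" using i by (intro mod_less_divisor) linarith
  ultimately have "(p ^^ k) x = x \<longleftrightarrow> (i + k) mod length cs = i"
    using i dist by (metis nth_eq_iff_index_eq)
  then show ?thesis using mod_shift_eq[OF i(1)] by simp
qed

lemma fix_pi: "{x \<in> A. p x = x} = {x \<in> set cs. length cs = 1} \<union> {x \<in> A - set cs. \<rho> x = x}"
proof -
  have "{x \<in> A. p x = x} = {x \<in> set cs. p x = x} \<union> {x \<in> A - set cs. p x = x}"
    using sub by auto
  also have "{x \<in> A - set cs. p x = x} = {x \<in> A - set cs. \<rho> x = x}"
    using pi_notC by auto
  also have "{x \<in> set cs. p x = x} = {x \<in> set cs. length cs = 1}"
    using pi_C_iff[of _ 1] by auto
  finally show ?thesis .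
qed

lemma qfix_pi:
  assumes q: "prime (q::nat)"
  shows "{x \<in> A. (p ^^ q) x = x \<and> p x \<noteq> x} =
     {x \<in> set cs. length cs = q} \<union> {x \<in> A - set cs. (\<rho> ^^ q) x = x \<and> \<rho> x \<noteq> x}"
proof -
  have q2: "q \<ge> 2" using q prime_ge_2_nat by blast
  have e: "(length cs dvd q \<and> \<not> length cs dvd 1) \<longleftrightarrow> length cs = q"
    using q unfolding prime_nat_iff by auto
  have "{x \<in> A. (p ^^ q) x = x \<and> p x \<noteq> x} =
     {x \<in> set cs. (p ^^ q) x = x \<and> p x \<noteq> x} \<union> {x \<in> A - set cs. (p ^^ q) x = x \<and> p x \<noteq> x}"
    using sub by auto
  also have "{x \<in> A - set cs. (p ^^ q) x = x \<and> p x \<noteq> x} = {x \<in> A - set cs. (\<rho> ^^ q) x = x \<and> \<rho> x \<noteq> x}"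
    using pi_notC pownotC by auto
  also have "{x \<in> set cs. (p ^^ q) x = x \<and> p x \<noteq> x} = {x \<in> set cs. length cs = q}"
    using pi_C_iff[of _ q] pi_C_iff[of _ 1] e by auto
  finally show ?thesis .
qed

end

definition DS :: "'a set \<Rightarrow> 'a \<Rightarrow> ('a list \<times> ('a \<Rightarrow> 'a)) set" where
  "DS A a = (SIGMA xs:{xs. distinct xs \<and> set xs \<subseteq> A - {a}}. {\<rho>. \<rho> permutes (A - set (a # xs))})"

lemma support_props:
  assumes pA: "p permutes A" and fin: "finite A" and aA: "a \<in> A"
  shows "support p a = a # tl (support p a)" "distinct (support p a)" "set (support p a) \<subseteq> A"
proof -
  have perm: "permutation p" using pA fin permutation_permutes by blast
  have lp: "least_power p a > 0" using least_power_of_permutation(2)[OF perm] .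
  show "support p a = a # tl (support p a)"
  proof -
    have ne: "support p a \<noteq> []" using lp by simp
    have "hd (support p a) = a" using lp by (simp add: hd_map)
    then show ?thesis using ne by (metis list.collapse)
  qed
  show "distinct (support p a)" using cycle_of_permutation[OF perm] .
  show "set (support p a) \<subseteq> A"
  proof
    fix y assume "y \<in> set (support p a)"
    then obtain i where "y = (p ^^ i) a" by auto
    then show "y \<in> A" using permutes_in_image[OF permutes_funpow[OF pA]] aA by simp
  qed
qed

lemma decomp_bij:
  assumes fin: "finite A" and aA: "a \<in> A"
  shows "bij_betw (\<lambda>(xs, \<rho>). cycle_of_list (a # xs) \<circ> \<rho>) (DS A a) {p. p permutes A}"
proof (rule bij_betw_byWitness[where f' = "\<lambda>p. (tl (support p a), \<lambda>y. if y \<in> A - set (support p a) then p y else y)"])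
  show "\<forall>d\<in>DS A a. (\<lambda>p. (tl (support p a), \<lambda>y. if y \<in> A - set (support p a) then p y else y))
          ((\<lambda>(xs, \<rho>). cycle_of_list (a # xs) \<circ> \<rho>) d) = d"
  proof
    fix d assume "d \<in> DS A a"
    then obtain xs \<rho> where d: "d = (xs, \<rho>)" and xs: "distinct xs" "set xs \<subseteq> A - {a}"
      and rp: "\<rho> permutes (A - set (a # xs))" unfolding DS_def by auto
    interpret cdec A "a # xs" \<rho> "cycle_of_list (a # xs) \<circ> \<rho>"
      using xs rp aA by unfold_locales auto
    have s: "support (cycle_of_list (a # xs) \<circ> \<rho>) a = a # xs" using support_pi by simp
    have eq: "(\<lambda>(xs, \<rho>). cycle_of_list (a # xs) \<circ> \<rho>) d = cycle_of_list (a # xs) \<circ> \<rho>" by (simp add: d)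
    have f: "(\<lambda>y. if y \<in> A - set (a # xs) then (cycle_of_list (a # xs) \<circ> \<rho>) y else y) = \<rho>"
    proof
      fix y show "(if y \<in> A - set (a # xs) then (cycle_of_list (a # xs) \<circ> \<rho>) y else y) = \<rho> y"
        using pi_notC[of y] rp by (auto simp: permutes_not_in)
    qed
    then show "(\<lambda>p. (tl (support p a), \<lambda>y. if y \<in> A - set (support p a) then p y else y))
          ((\<lambda>(xs, \<rho>). cycle_of_list (a # xs) \<circ> \<rho>) d) = d"
      unfolding eq s using f d by simp
  qed
next
  show "\<forall>p\<in>{p. p permutes A}. (\<lambda>(xs, \<rho>). cycle_of_list (a # xs) \<circ> \<rho>)
      ((\<lambda>p. (tl (support p a), \<lambda>y. if y \<in> A - set (support p a) then p y else y)) p) = p"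
  proof
    fix p assume "p \<in> {p. p permutes A}"
    hence pA: "p permutes A" by simp
    note sp = support_props[OF pA fin aA]
    have perm: "permutation p" using pA fin permutation_permutes by blast
    define s where "s = support p a"
    define \<rho> where "\<rho> = (\<lambda>y. if y \<in> A - set s then p y else y)"
    have rp: "\<rho> permutes (A - set s)" unfolding \<rho>_def s_def using semidecomposition[OF pA fin] .
    have "cycle_of_list s \<circ> \<rho> = p"
    proof
      fix y
      show "(cycle_of_list s \<circ> \<rho>) y = p y"
      proof (cases "y \<in> set s")
        case True
        then show ?thesis using cycle_restrict[OF perm, of y a] by (simp add: \<rho>_def s_def)
      next
        case False
        have "\<rho> y \<notin> set s"
        proof (cases "y \<in> A")
          case True
          then show ?thesis using permutes_in_image[OF rp, of y] False by auto
        next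
          case F2: False
          then show ?thesis using False by (simp add: \<rho>_def)
        qed
        then have "(cycle_of_list s \<circ> \<rho>) y = \<rho> y" by (simp add: id_outside_supp)
        also have "\<rho> y = p y" using False pA by (auto simp: \<rho>_def permutes_not_in)
        finally show ?thesis .
      qed
    qed
    then show "(\<lambda>(xs, \<rho>). cycle_of_list (a # xs) \<circ> \<rho>)
      ((\<lambda>p. (tl (support p a), \<lambda>y. if y \<in> A - set (support p a) then p y else y)) p) = p"
      using sp(1) unfolding s_def[symmetric] \<rho>_def[symmetric] by simp
  qed
next
  show "(\<lambda>(xs, \<rho>). cycle_of_list (a # xs) \<circ> \<rho>) ` DS A a \<subseteq> {p. p permutes A}"
  proof
    fix p assume "p \<in> (\<lambda>(xs, \<rho>). cycle_of_list (a # xs) \<circ> \<rho>) ` DS A a"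
    then obtain xs \<rho> where p: "p = cycle_of_list (a # xs) \<circ> \<rho>" and xs: "distinct xs" "set xs \<subseteq> A - {a}"
      and rp: "\<rho> permutes (A - set (a # xs))" unfolding DS_def by auto
    interpret cdec A "a # xs" \<rho> "cycle_of_list (a # xs) \<circ> \<rho>"
      using xs rp aA by unfold_locales auto
    show "p \<in> {p. p permutes A}" using pi_permutes p by simp
  qed
next
  show "(\<lambda>p. (tl (support p a), \<lambda>y. if y \<in> A - set (support p a) then p y else y)) ` {p. p permutes A} \<subseteq> DS A a"
  proof
    fix d assume "d \<in> (\<lambda>p. (tl (support p a), \<lambda>y. if y \<in> A - set (support p a) then p y else y)) ` {p. p permutes A}"
    then obtain p where pA: "p permutes A" and d: "d = (tl (support p a), \<lambda>y. if y \<in> A - set (support p a) then p y else y)"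
      by auto
    note sp = support_props[OF pA fin aA]
    have rp: "(\<lambda>y. if y \<in> A - set (support p a) then p y else y) permutes (A - set (a # tl (support p a)))"
      using semidecomposition[OF pA fin, of a] sp(1) by simp
    have "distinct (a # tl (support p a))" using sp(1,2) by metis
    moreover have "set (a # tl (support p a)) \<subseteq> A" using sp(1,3) by metis
    ultimately show "d \<in> DS A a" unfolding DS_def d using rp by auto
  qed
qed

definition MM :: "nat \<Rightarrow> nat \<Rightarrow> nat \<Rightarrow> nat \<Rightarrow> real" where
  "MM q m i j = (if i + q * j \<le> m then fact m / (fact i * fact j * real q ^ j) else 0)"

lemma S1_card: "card {k. k \<le> n \<and> s \<le> n - k} = Suc n - s"
proof (cases "s \<le> n")
  case True
  then have "{k. k \<le> n \<and> s \<le> n - k} = {..n - s}" by auto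
  then show ?thesis using True by simp
next
  case False
  then have "{k. k \<le> n \<and> s \<le> n - k} = {}" by auto
  then show ?thesis using False by simp
qed

lemma arith_step:
  fixes q n i j :: nat
  assumes q: "q \<ge> 2"
  shows "(\<Sum>k\<le>n. fact n / fact (n - k) *
      (MM q (n - k) i j + (if k = 0 \<and> i > 0 then MM q n (i - 1) j else 0)
         + (if k + 1 = q \<and> j > 0 then MM q (n - k) i (j - 1) else 0))) = MM q (Suc n) i j"
proof -
  define s where "s = i + q * j"
  define c where "c = 1 / (fact i * fact j * real q ^ j)"
  have qpos: "real q > 0" using q by simp
  have S1: "(\<Sum>k\<le>n. fact n / fact (n - k) * MM q (n - k) i j) = real (Suc n - s) * fact n * c"
  proof -
    have "(\<Sum>k\<le>n. fact n / fact (n - k) * MM q (n - k) i j) = (\<Sum>k\<le>n. (if s \<le> n - k then fact n * c else 0))"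
      by (rule sum.cong) (auto simp: MM_def s_def c_def)
    also have "\<dots> = (\<Sum>k\<in>{k. k \<le> n \<and> s \<le> n - k}. fact n * c)"
      by (subst sum.inter_filter[symmetric]) (auto intro!: sum.cong)
    also have "\<dots> = real (Suc n - s) * fact n * c" using S1_card[of n s] by simp
    finally show ?thesis .
  qed
  have S2: "(\<Sum>k\<le>n. fact n / fact (n - k) * (if k = 0 \<and> i > 0 then MM q n (i - 1) j else 0))
      = (if s \<le> Suc n then real i * fact n * c else 0)"
  proof -
    have "(\<Sum>k\<le>n. fact n / fact (n - k) * (if k = 0 \<and> i > 0 then MM q n (i - 1) j else 0))
        = (\<Sum>k\<in>{0}. fact n / fact (n - k) * (if k = 0 \<and> i > 0 then MM q n (i - 1) j else 0))"
      by (rule sum.mono_neutral_right) auto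
    also have "\<dots> = (if i > 0 then MM q n (i - 1) j else 0)" by simp
    also have "\<dots> = (if s \<le> Suc n then real i * fact n * c else 0)"
    proof (cases "i > 0")
      case True
      then obtain i' where i': "i = Suc i'" by (cases i) auto
      have pp: "fact i' * fact j * real q ^ j > (0::real)" using qpos by simp
      have e1: "fact (Suc i') * fact j * real q ^ j = real (Suc i') * (fact i' * fact j * real q ^ j)"
        by (simp add: fact_Suc algebra_simps del: of_nat_Suc)
      have "real (Suc i') * fact n * (1 / (fact (Suc i') * fact j * real q ^ j)) = fact n / (fact i' * fact j * real q ^ j)"
        unfolding e1 using pp by (simp del: of_nat_Suc)
      then show ?thesis unfolding MM_def s_def c_def i' by auto
    next
      case False then show ?thesis by simp
    qed
    finally show ?thesis .
  qed
  have S3: "(\<Sum>k\<le>n. fact n / fact (n - k) * (if k + 1 = q \<and> j > 0 then MM q (n - k) i (j - 1) else 0))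
      = (if s \<le> Suc n then real j * real q * fact n * c else 0)"
  proof (cases "q \<le> Suc n \<and> j > 0")
    case True
    then obtain j' where j': "j = Suc j'" by (cases j) auto
    have "(\<Sum>k\<le>n. fact n / fact (n - k) * (if k + 1 = q \<and> j > 0 then MM q (n - k) i (j - 1) else 0))
        = (\<Sum>k\<in>{q - 1}. fact n / fact (n - k) * (if k + 1 = q \<and> j > 0 then MM q (n - k) i (j - 1) else 0))"
      using True q by (intro sum.mono_neutral_right) auto
    also have "\<dots> = fact n / fact (n - (q - 1)) * MM q (n - (q - 1)) i (j - 1)" using True q by simp
    also have "\<dots> = (if s \<le> Suc n then real j * real q * fact n * c else 0)"
    proof -
      have e: "(i + q * j' \<le> n - (q - 1)) \<longleftrightarrow> s \<le> Suc n" using True q unfolding s_def j' by auto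
      have f: "fact (n - (q - 1)) > (0::real)" by simp
      have pp: "fact i * fact j' * real q ^ j' > (0::real)" using qpos by simp
      have e1: "fact i * fact (Suc j') * real q ^ (Suc j') = (real (Suc j') * real q) * (fact i * fact j' * real q ^ j')"
        by (simp add: fact_Suc algebra_simps del: of_nat_Suc)
      have a1: "fact n / fact (n - (q - 1)) * (fact (n - (q - 1)) / (fact i * fact j' * real q ^ j'))
          = fact n / (fact i * fact j' * real q ^ j')" using f by simp
      have a2: "real (Suc j') * real q * fact n * (1 / (fact i * fact (Suc j') * real q ^ (Suc j')))
          = fact n / (fact i * fact j' * real q ^ j')" unfolding e1 using pp qpos by (simp del: of_nat_Suc)
      show ?thesis
      proof (cases "s \<le> Suc n")
        case True
        have m: "MM q (n - (q - 1)) i (j - 1) = fact (n - (q - 1)) / (fact i * fact j' * real q ^ j')"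
          unfolding MM_def j' using e True by simp
        have cc: "real j * real q * fact n * c = real (Suc j') * real q * fact n * (1 / (fact i * fact (Suc j') * real q ^ (Suc j')))"
          unfolding c_def j' by simp
        show ?thesis unfolding m a1 cc a2 using True by simp
      next
        case False
        have m: "MM q (n - (q - 1)) i (j - 1) = 0"
          unfolding MM_def j' using e False by simp
        show ?thesis unfolding m using False by simp
      qed
    qed
    finally show ?thesis .
  next
    case False
    have "(\<Sum>k\<le>n. fact n / fact (n - k) * (if k + 1 = q \<and> j > 0 then MM q (n - k) i (j - 1) else 0)) = 0"
      using False by (intro sum.neutral) auto
    moreover have "\<not> (s \<le> Suc n) \<or> j = 0"
    proof (cases "j = 0")
      case False
      then have "q \<le> s" unfolding s_def by (cases j) auto
      then show ?thesis using \<open>\<not> (q \<le> Suc n \<and> j > 0)\<close> False by auto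
    qed simp
    ultimately show ?thesis by auto
  qed
  have "(\<Sum>k\<le>n. fact n / fact (n - k) *
      (MM q (n - k) i j + (if k = 0 \<and> i > 0 then MM q n (i - 1) j else 0)
         + (if k + 1 = q \<and> j > 0 then MM q (n - k) i (j - 1) else 0)))
      = real (Suc n - s) * fact n * c + (if s \<le> Suc n then real i * fact n * c else 0)
        + (if s \<le> Suc n then real j * real q * fact n * c else 0)"
    unfolding distrib_left sum.distrib S1 S2 S3 ..
  also have "\<dots> = MM q (Suc n) i j"
  proof (cases "s \<le> Suc n")
    case True
    have "Suc n - s + i + j * q = Suc n" using True unfolding s_def by simp
    then have h: "real (Suc n - s) + real i + real j * real q = real (Suc n)"
      by (metis of_nat_add of_nat_mult)
    have "real (Suc n - s) * fact n * c + real i * fact n * c + real j * real q * fact n * c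
        = (real (Suc n - s) + real i + real j * real q) * (fact n * c)" by (simp only: algebra_simps)
    also have "\<dots> = real (Suc n) * fact n * c" unfolding h by simp
    also have "\<dots> = fact (Suc n) * c" by (simp only: fact_Suc)
    also have "\<dots> = MM q (Suc n) i j" using True unfolding MM_def s_def c_def by simp
    finally show ?thesis using True by simp
  next
    case False
    then show ?thesis unfolding MM_def s_def by simp
  qed
  finally show ?thesis .
qed

definition fp :: "'a set \<Rightarrow> ('a \<Rightarrow> 'a) \<Rightarrow> nat" where
  "fp A p = card {x \<in> A. p x = x}"
definition qp :: "nat \<Rightarrow> 'a set \<Rightarrow> ('a \<Rightarrow> 'a) \<Rightarrow> nat" where
  "qp q A p = card {x \<in> A. (p ^^ q) x = x \<and> p x \<noteq> x}"

lemma (in cdec) fp_pi: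
  assumes fin: "finite A"
  shows "fp A p = fp (A - set cs) \<rho> + (if length cs = 1 then 1 else 0)"
proof -
  have "fp A p = card ({x \<in> set cs. length cs = 1} \<union> {x \<in> A - set cs. \<rho> x = x})"
    unfolding fp_def fix_pi ..
  also have "\<dots> = card {x \<in> set cs. length cs = 1} + card {x \<in> A - set cs. \<rho> x = x}"
    by (rule card_Un_disjoint) (use fin in auto)
  also have "card {x \<in> set cs. length cs = 1} = (if length cs = 1 then 1 else 0)"
    using distinct_card[OF dist] by auto
  finally show ?thesis unfolding fp_def by simp
qed

lemma (in cdec) qp_pi:
  assumes fin: "finite A" and q: "prime q"
  shows "qp q A p = qp q (A - set cs) \<rho> + (if length cs = q then q else 0)"
proof -
  have "qp q A p = card ({x \<in> set cs. length cs = q} \<union> {x \<in> A - set cs. (\<rho> ^^ q) x = x \<and> \<rho> x \<noteq> x})"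
    unfolding qp_def qfix_pi[OF q] ..
  also have "\<dots> = card {x \<in> set cs. length cs = q} + card {x \<in> A - set cs. (\<rho> ^^ q) x = x \<and> \<rho> x \<noteq> x}"
    by (rule card_Un_disjoint) (use fin in auto)
  also have "card {x \<in> set cs. length cs = q} = (if length cs = q then q else 0)"
    using distinct_card[OF dist] by auto
  finally show ?thesis unfolding qp_def by simp
qed

lemma finite_DL: "finite A \<Longrightarrow> finite {xs. distinct xs \<and> set xs \<subseteq> A - {a}}"
  using finite_subset_distinct[of "A - {a}"] by (simp add: conj_commute)

lemma sum_decomp:
  assumes fin: "finite A" and aA: "a \<in> A"
  shows "(\<Sum>p\<in>{p. p permutes A}. g p) =
    (\<Sum>xs\<in>{xs. distinct xs \<and> set xs \<subseteq> A - {a}}. \<Sum>\<rho>\<in>{\<rho>. \<rho> permutes (A - set (a # xs))}. g (cycle_of_list (a # xs) \<circ> \<rho>))"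
proof -
  have "(\<Sum>p\<in>{p. p permutes A}. g p) = (\<Sum>d\<in>DS A a. g ((\<lambda>(xs, \<rho>). cycle_of_list (a # xs) \<circ> \<rho>) d))"
    using sum.reindex_bij_betw[OF decomp_bij[OF fin aA], of g] by simp
  also have "\<dots> = (\<Sum>xs\<in>{xs. distinct xs \<and> set xs \<subseteq> A - {a}}. \<Sum>\<rho>\<in>{\<rho>. \<rho> permutes (A - set (a # xs))}. g (cycle_of_list (a # xs) \<circ> \<rho>))"
    unfolding DS_def
    by (subst sum.Sigma) (auto simp: finite_DL[OF fin] finite_permutations fin split_beta)
  finally show ?thesis .
qed

definition FM :: "nat \<Rightarrow> 'a set \<Rightarrow> nat \<Rightarrow> nat \<Rightarrow> real" where
  "FM q A i j = (\<Sum>p\<in>{p. p permutes A}. real (fp A p choose i) * real ((qp q A p div q) choose j))"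

lemma choose_plus_ind:
  "((f + (if P then 1 else 0)) choose i) = (f choose i) + (if P \<and> i > 0 then f choose (i - 1) else 0)"
  by (cases i) auto

lemma sum_shift:
  fixes f g :: "'b \<Rightarrow> nat"
  assumes "\<not> (P \<and> R)"
  shows "(\<Sum>x\<in>X. real ((f x + (if P then 1 else 0)) choose i) * real ((g x + (if R then 1 else 0)) choose j))
    = (\<Sum>x\<in>X. real (f x choose i) * real (g x choose j))
      + (if P \<and> i > 0 then (\<Sum>x\<in>X. real (f x choose (i - 1)) * real (g x choose j)) else 0)
      + (if R \<and> j > 0 then (\<Sum>x\<in>X. real (f x choose i) * real (g x choose (j - 1))) else 0)"
proof (cases P)
  case True
  then have nR: "\<not> R" using assms by blast
  show ?thesis
  proof (cases i)
    case 0 then show ?thesis using True nR by simp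
  next
    case (Suc i')
    have "(\<Sum>x\<in>X. real ((f x + 1) choose i) * real (g x choose j))
       = (\<Sum>x\<in>X. real (f x choose i) * real (g x choose j) + real (f x choose i') * real (g x choose j))"
      by (rule sum.cong) (simp_all add: Suc distrib_right)
    then show ?thesis using True nR Suc by (simp add: sum.distrib)
  qed
next
  case False
  show ?thesis
  proof (cases "R \<and> j > 0")
    case True
    then obtain j' where j': "j = Suc j'" by (cases j) auto
    have "(\<Sum>x\<in>X. real (f x choose i) * real ((g x + 1) choose j))
       = (\<Sum>x\<in>X. real (f x choose i) * real (g x choose j) + real (f x choose i) * real (g x choose j'))"
      by (rule sum.cong) (simp_all add: j' distrib_left)
    then show ?thesis using True False j' by (simp add: sum.distrib)
  next
    case F2: False
    show ?thesis
    proof (cases R)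
      case True
      then have "j = 0" using F2 by simp
      then show ?thesis using True False by simp
    next
      case F3: False
      then show ?thesis using False by simp
    qed
  qed
qed

lemma FM_formula:
  assumes fin: "finite A" and q: "prime q"
  shows "FM q A i j = MM q (card A) i j"
  using fin
proof (induction "card A" arbitrary: A i j rule: less_induct)
  case less
  have q2: "q \<ge> 2" using q prime_ge_2_nat by blast
  show ?case
  proof (cases "A = {}")
    case True
    have "{p. p permutes ({}::'a set)} = {id}" by (auto simp: permutes_empty)
    then have "FM q A i j = real (0 choose i) * real (0 choose j)" using True unfolding FM_def fp_def qp_def by simp
    then show ?thesis using True q2 by (cases i; cases j) (simp_all add: MM_def)
  next
    case False
    then obtain a where aA: "a \<in> A" by blast
    define n where "n = card A - 1"
    have cA: "card A = Suc n" using False less.prems aA n_def by (simp add: card_gt_0_iff)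
    define DL where "DL = {xs. distinct xs \<and> set xs \<subseteq> A - {a}}"
    define V where "V k = MM q (n - k) i j + (if k = 0 \<and> i > 0 then MM q n (i - 1) j else 0)
         + (if k + 1 = q \<and> j > 0 then MM q (n - k) i (j - 1) else 0)" for k
    have inner: "(\<Sum>\<rho>\<in>{\<rho>. \<rho> permutes (A - set (a # xs))}. real (fp A (cycle_of_list (a # xs) \<circ> \<rho>) choose i) *
                  real ((qp q A (cycle_of_list (a # xs) \<circ> \<rho>) div q) choose j)) = V (length xs)"
      if xs: "xs \<in> DL" for xs
    proof -
      define A' where "A' = A - set (a # xs)"
      have finA': "finite A'" using less.prems A'_def by simp
      have cA': "card A' = n - length xs"
      proof -
        have "card A' = card A - card (set (a # xs))" unfolding A'_def
          using xs aA less.prems unfolding DL_def by (intro card_Diff_subset) auto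
        also have "card (set (a # xs)) = Suc (length xs)" using xs unfolding DL_def
          by (subst set_simps, subst card_insert_disjoint) (auto simp: distinct_card)
        finally show ?thesis using cA by simp
      qed
      have lt: "card A' < card A" using cA cA' by simp
      have IH: "FM q A' i' j' = MM q (n - length xs) i' j'" for i' j'
        using less.hyps[OF lt finA'] cA' by simp
      have "(\<Sum>\<rho>\<in>{\<rho>. \<rho> permutes A'}. real (fp A (cycle_of_list (a # xs) \<circ> \<rho>) choose i) *
                  real ((qp q A (cycle_of_list (a # xs) \<circ> \<rho>) div q) choose j))
          = (\<Sum>\<rho>\<in>{\<rho>. \<rho> permutes A'}. real ((fp A' \<rho> + (if xs = [] then 1 else 0)) choose i) *
                  real (((qp q A' \<rho> div q) + (if Suc (length xs) = q then 1 else 0)) choose j))"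
      proof (rule sum.cong)
        fix \<rho> assume "\<rho> \<in> {\<rho>. \<rho> permutes A'}"
        then have rp: "\<rho> permutes A'" by simp
        interpret cdec A "a # xs" \<rho> "cycle_of_list (a # xs) \<circ> \<rho>"
          using xs rp aA unfolding DL_def A'_def by unfold_locales auto
        have e1: "fp A (cycle_of_list (a # xs) \<circ> \<rho>) = fp A' \<rho> + (if xs = [] then 1 else 0)"
          using fp_pi[OF less.prems] unfolding A'_def by simp
        have e2: "qp q A (cycle_of_list (a # xs) \<circ> \<rho>) div q = qp q A' \<rho> div q + (if Suc (length xs) = q then 1 else 0)"
        proof -
          have "qp q A (cycle_of_list (a # xs) \<circ> \<rho>) = qp q A' \<rho> + (if Suc (length xs) = q then q else 0)"
            using qp_pi[OF less.prems q] unfolding A'_def by simp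
          then show ?thesis using q2 by (cases "Suc (length xs) = q") simp_all
        qed
        show "real (fp A (cycle_of_list (a # xs) \<circ> \<rho>) choose i) *
                  real ((qp q A (cycle_of_list (a # xs) \<circ> \<rho>) div q) choose j) =
              real ((fp A' \<rho> + (if xs = [] then 1 else 0)) choose i) *
                  real (((qp q A' \<rho> div q) + (if Suc (length xs) = q then 1 else 0)) choose j)"
          unfolding e1 e2 ..
      qed simp
      also have "\<dots> = FM q A' i j + (if xs = [] \<and> i > 0 then FM q A' (i - 1) j else 0)
          + (if Suc (length xs) = q \<and> j > 0 then FM q A' i (j - 1) else 0)"
        unfolding FM_def by (rule sum_shift) (use q2 in auto)
      also have "\<dots> = V (length xs)" unfolding IH V_def by simp
      finally show ?thesis unfolding A'_def .
    qed
    have "FM q A i j = (\<Sum>xs\<in>DL. V (length xs))"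
      unfolding FM_def sum_decomp[OF less.prems aA] DL_def[symmetric]
      using inner by (intro sum.cong) auto
    also have "\<dots> = (\<Sum>k\<in>{..n}. \<Sum>xs\<in>{xs \<in> DL. length xs = k}. V (length xs))"
    proof (rule sum.group[symmetric])
      show "finite DL" unfolding DL_def using finite_DL[OF less.prems] .
      show "length ` DL \<subseteq> {..n}"
      proof
        fix k assume "k \<in> length ` DL"
        then obtain xs where "xs \<in> DL" "k = length xs" by auto
        then have xs: "distinct xs" "set xs \<subseteq> A - {a}" "k = length xs" unfolding DL_def by auto
        have "card (set xs) \<le> card (A - {a})" using xs less.prems by (intro card_mono) auto
        moreover have "card (set xs) = k" using xs distinct_card by metis
        ultimately have "k \<le> card (A - {a})" by simp
        then show "k \<in> {..n}" using cA aA less.prems by simp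
      qed
    qed simp
    also have "\<dots> = (\<Sum>k\<le>n. fact n / fact (n - k) * V k)"
    proof (rule sum.cong)
      fix k assume k: "k \<in> {..n}"
      have "card {xs \<in> DL. length xs = k} = \<Prod>{card (A - {a}) - k + 1 .. card (A - {a})}"
      proof -
        have "{xs \<in> DL. length xs = k} = {xs. length xs = k \<and> distinct xs \<and> set xs \<subseteq> A - {a}}"
          unfolding DL_def by auto
        then show ?thesis using card_lists_distinct_length_eq[of "A - {a}" k] less.prems k cA aA by simp
      qed
      also have "\<dots> = \<Prod>{n - k + 1 .. n}" using cA aA less.prems by simp
      finally have cd: "card {xs \<in> DL. length xs = k} = \<Prod>{n - k + 1 .. n}" .
      have "real (\<Prod>{n - k + 1 .. n}) = fact n / fact (n - k)"
      proof -
        have "fact n = (fact (n - k) :: nat) * \<Prod>{Suc (n - k) .. n}"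
          using k by (intro fact_eq_fact_times) auto
        then have "real (fact n) = real (fact (n - k)) * real (\<Prod>{n - k + 1 .. n})"
          by (metis Suc_eq_plus1 of_nat_mult)
        then show ?thesis by (simp del: of_nat_prod)
      qed
      then show "(\<Sum>xs\<in>{xs \<in> DL. length xs = k}. V (length xs)) = fact n / fact (n - k) * V k"
        using cd by simp
    qed simp
    also have "\<dots> = MM q (Suc n) i j" unfolding V_def using arith_step[OF q2] by simp
    finally show ?thesis using cA by simp
  qed
qed

lemma x_choose: "x * (x choose i) = Suc i * (x choose Suc i) + i * (x choose i)"
proof -
  have a: "Suc i * (x choose Suc i) = (x - i) * (x choose i)"
    using binomial_absorption[of i x] binomial_absorb_comp[of x i] by simp
  have "x * (x choose i) = (x - i) * (x choose i) + i * (x choose i)"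
    by (cases "i \<le> x") (auto simp: binomial_eq_0 simp flip: distrib_right)
  then show ?thesis using a by simp
qed

lemma pow_stirling: "(x::nat) ^ a = (\<Sum>i\<le>a. Stirling a i * fact i * (x choose i))"
proof (induction a)
  case 0 then show ?case by simp
next
  case (Suc a)
  have "x ^ Suc a = (\<Sum>i\<le>a. Stirling a i * fact i * (x * (x choose i)))"
    using Suc by (simp add: sum_distrib_left algebra_simps)
  also have "\<dots> = (\<Sum>i\<le>a. Stirling a i * fact (Suc i) * (x choose Suc i))
       + (\<Sum>i\<le>a. Stirling a i * i * fact i * (x choose i))"
    unfolding x_choose by (simp add: sum.distrib algebra_simps)
  also have "(\<Sum>i\<le>a. Stirling a i * fact (Suc i) * (x choose Suc i))
      = (\<Sum>i\<le>Suc a. (if i = 0 then 0 else Stirling a (i - 1)) * fact i * (x choose i))"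
    by (subst sum.atMost_Suc_shift) simp
  also have "(\<Sum>i\<le>a. Stirling a i * i * fact i * (x choose i))
      = (\<Sum>i\<le>Suc a. Stirling a i * i * fact i * (x choose i))"
    by simp
  also have "(\<Sum>i\<le>Suc a. (if i = 0 then 0 else Stirling a (i - 1)) * fact i * (x choose i))
      + (\<Sum>i\<le>Suc a. Stirling a i * i * fact i * (x choose i))
      = (\<Sum>i\<le>Suc a. Stirling (Suc a) i * fact i * (x choose i))"
    unfolding sum.distrib[symmetric]
  proof (rule sum.cong)
    fix i assume "i \<in> {..Suc a}"
    show "(if i = 0 then 0 else Stirling a (i - 1)) * fact i * (x choose i) + Stirling a i * i * fact i * (x choose i)
      = Stirling (Suc a) i * fact i * (x choose i)"
      by (cases i) (simp_all add: algebra_simps)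
  qed simp
  finally show ?case .
qed

lemma qp_dvd:
  assumes fin: "finite A" and q: "prime q" and pA: "p permutes A"
  shows "q dvd qp q A p"
  using fin pA
proof (induction "card A" arbitrary: A p rule: less_induct)
  case less
  show ?case
  proof (cases "A = {}")
    case True
    then have "qp q A p = 0" unfolding qp_def by simp
    then show ?thesis by simp
  next
    case False
    then obtain a where aA: "a \<in> A" by blast
    have "p \<in> (\<lambda>(xs, \<rho>). cycle_of_list (a # xs) \<circ> \<rho>) ` DS A a"
      using bij_betw_imp_surj_on[OF decomp_bij[OF less.prems(1) aA]] less.prems(2) by blast
    then obtain xs \<rho> where p: "p = cycle_of_list (a # xs) \<circ> \<rho>" and xs: "distinct xs" "set xs \<subseteq> A - {a}"
      and rp: "\<rho> permutes (A - set (a # xs))" unfolding DS_def by auto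
    interpret cdec A "a # xs" \<rho> p
      using xs rp aA p by unfold_locales auto
    have "card (A - set (a # xs)) < card A"
      using less.prems(1) aA by (intro psubset_card_mono) auto
    then have "q dvd qp q (A - set (a # xs)) \<rho>"
      using less.hyps less.prems(1) rp by blast
    then show ?thesis using qp_pi[OF less.prems(1) q] by simp
  qed
qed

lemma funpow_fix: "f x = x \<Longrightarrow> (f ^^ n) x = x"
  by (induction n) auto

lemma c1_split:
  assumes "p permutes {..<n}"
  shows "c1 n (p ^^ q) = fp {..<n} p + qp q {..<n} p"
proof -
  have "{i \<in> {..<n}. (p ^^ q) i = i} = {i \<in> {..<n}. p i = i} \<union> {i \<in> {..<n}. (p ^^ q) i = i \<and> p i \<noteq> i}"
    by (auto simp: funpow_fix)
  moreover have "card ({i \<in> {..<n}. p i = i} \<union> {i \<in> {..<n}. (p ^^ q) i = i \<and> p i \<noteq> i})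
     = card {i \<in> {..<n}. p i = i} + card {i \<in> {..<n}. (p ^^ q) i = i \<and> p i \<noteq> i}"
    by (rule card_Un_disjoint) auto
  ultimately show ?thesis unfolding c1_def fp_def qp_def by simp
qed

lemma sum3_swap:
  fixes f :: "nat \<Rightarrow> nat \<Rightarrow> nat \<Rightarrow> real"
  shows "(\<Sum>p\<in>S. \<Sum>a\<le>d. \<Sum>i\<le>a. \<Sum>j\<le>d - a. f a i j * g p i j)
   = (\<Sum>a\<le>d. \<Sum>i\<le>a. \<Sum>j\<le>d - a. f a i j * (\<Sum>p\<in>S. g p i j))"
proof -
  have "(\<Sum>p\<in>S. \<Sum>a\<le>d. \<Sum>i\<le>a. \<Sum>j\<le>d - a. f a i j * g p i j)
      = (\<Sum>a\<le>d. \<Sum>p\<in>S. \<Sum>i\<le>a. \<Sum>j\<le>d - a. f a i j * g p i j)" by (rule sum.swap)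
  also have "\<dots> = (\<Sum>a\<le>d. \<Sum>i\<le>a. \<Sum>p\<in>S. \<Sum>j\<le>d - a. f a i j * g p i j)"
    by (rule sum.cong[OF refl], rule sum.swap)
  also have "\<dots> = (\<Sum>a\<le>d. \<Sum>i\<le>a. \<Sum>j\<le>d - a. \<Sum>p\<in>S. f a i j * g p i j)"
    by (rule sum.cong[OF refl], rule sum.cong[OF refl], rule sum.swap)
  also have "\<dots> = (\<Sum>a\<le>d. \<Sum>i\<le>a. \<Sum>j\<le>d - a. f a i j * (\<Sum>p\<in>S. g p i j))"
    by (simp add: sum_distrib_left)
  finally show ?thesis .
qed

definition PP :: "nat \<Rightarrow> nat \<Rightarrow> real" where
  "PP q d = (\<Sum>a\<le>d. \<Sum>i\<le>a. \<Sum>j\<le>d - a.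
      real (d choose a) * real (Stirling a i) * real (Stirling (d - a) j) * real q ^ (d - a - j))"

theorem moment_eq:
  assumes q: "prime q" and n: "d * q \<le> n"
  shows "momentA n q d = PP q d"
proof -
  define A where "A = {..<n}"
  define S where "S = {p. p permutes A}"
  define F where "F p = fp A p" for p
  define Q where "Q p = qp q A p div q" for p
  have qpos: "real q > 0" using q prime_gt_0_nat by simp
  define f where "f a i j = real (d choose a) * real (Stirling a i) * fact i * real q ^ (d - a)
        * real (Stirling (d - a) j) * fact j" for a i j
  have pt: "real (c1 n (p ^^ q)) ^ d = (\<Sum>a\<le>d. \<Sum>i\<le>a. \<Sum>j\<le>d - a. f a i j * (real (F p choose i) * real (Q p choose j)))"
    if p: "p \<in> S" for p
  proof -
    have pA: "p permutes A" using p S_def by simp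
    have "c1 n (p ^^ q) = F p + q * Q p"
      using c1_split[of p n q] pA qp_dvd[OF _ q pA] unfolding A_def F_def Q_def by simp
    then have "real (c1 n (p ^^ q)) ^ d = (real (F p) + real q * real (Q p)) ^ d" by simp
    also have "\<dots> = (\<Sum>a\<le>d. real (d choose a) * real (F p) ^ a * (real q * real (Q p)) ^ (d - a))"
      by (rule binomial_ring)
    also have "\<dots> = (\<Sum>a\<le>d. real (d choose a) * (\<Sum>i\<le>a. real (Stirling a i) * fact i * real (F p choose i))
                     * real q ^ (d - a) * (\<Sum>j\<le>d - a. real (Stirling (d - a) j) * fact j * real (Q p choose j)))"
    proof (rule sum.cong[OF refl])
      fix a
      have e1: "real (F p) ^ a = (\<Sum>i\<le>a. real (Stirling a i) * fact i * real (F p choose i))"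
        using arg_cong[OF pow_stirling[of "F p" a], of real] by simp
      have e2: "real (Q p) ^ (d - a) = (\<Sum>j\<le>d - a. real (Stirling (d - a) j) * fact j * real (Q p choose j))"
        using arg_cong[OF pow_stirling[of "Q p" "d - a"], of real] by simp
      show "real (d choose a) * real (F p) ^ a * (real q * real (Q p)) ^ (d - a) =
         real (d choose a) * (\<Sum>i\<le>a. real (Stirling a i) * fact i * real (F p choose i))
                     * real q ^ (d - a) * (\<Sum>j\<le>d - a. real (Stirling (d - a) j) * fact j * real (Q p choose j))"
        unfolding e1[symmetric] e2[symmetric] by (simp add: power_mult_distrib)
    qed
    also have "\<dots> = (\<Sum>a\<le>d. \<Sum>i\<le>a. \<Sum>j\<le>d - a. f a i j * (real (F p choose i) * real (Q p choose j)))"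
      unfolding f_def by (simp add: sum_distrib_left sum_distrib_right mult_ac)
    finally show ?thesis .
  qed
  have "(\<Sum>p\<in>S. real (c1 n (p ^^ q)) ^ d)
      = (\<Sum>p\<in>S. \<Sum>a\<le>d. \<Sum>i\<le>a. \<Sum>j\<le>d - a. f a i j * (real (F p choose i) * real (Q p choose j)))"
    using pt by (rule sum.cong[OF refl])
  also have "\<dots> = (\<Sum>a\<le>d. \<Sum>i\<le>a. \<Sum>j\<le>d - a. f a i j * FM q A i j)"
    unfolding sum3_swap FM_def F_def Q_def S_def ..
  also have "\<dots> = (\<Sum>a\<le>d. \<Sum>i\<le>a. \<Sum>j\<le>d - a. f a i j * (fact n / (fact i * fact j * real q ^ j)))"
  proof (intro sum.cong refl)
    fix a i j assume a: "a \<in> {..d}" and i: "i \<in> {..a}" and j: "j \<in> {..d - a}"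
    have q1: "q \<ge> 1" using prime_gt_0_nat[OF q] by simp
    have "i + q * j \<le> n"
    proof -
      have "i + q * j \<le> a + q * (d - a)" using i j by (intro add_mono mult_le_mono2) auto
      also have "\<dots> \<le> q * a + q * (d - a)" using q1 by (intro add_mono) auto
      also have "\<dots> = d * q" using a by (simp add: algebra_simps flip: distrib_left)
      finally show ?thesis using n by simp
    qed
    then show "f a i j * FM q A i j = f a i j * (fact n / (fact i * fact j * real q ^ j))"
      using FM_formula[of A q i j] q unfolding A_def MM_def by simp
  qed
  also have "\<dots> = fact n * PP q d"
    unfolding PP_def sum_distrib_left
  proof (intro sum.cong refl)
    fix a i j assume a: "a \<in> {..d}" and i: "i \<in> {..a}" and j: "j \<in> {..d - a}"
    have qq: "real q ^ (d - a) = real q ^ (d - a - j) * real q ^ j"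
    proof -
      have "d - a = (d - a - j) + j" using j by simp
      then show ?thesis by (metis power_add)
    qed
    show "f a i j * (fact n / (fact i * fact j * real q ^ j)) =
      fact n * (real (d choose a) * real (Stirling a i) * real (Stirling (d - a) j) * real q ^ (d - a - j))"
      unfolding f_def qq using qpos by (simp add: field_simps)
  qed
  finally have "(\<Sum>p\<in>S. real (c1 n (p ^^ q)) ^ d) = fact n * PP q d" .
  then show ?thesis unfolding momentA_def S_def A_def by simp
qed

lemma stirling_aux: "\<forall>m. Stirling n (Suc m) + m ^ n \<le> (Suc m) ^ n \<and> Stirling n 0 \<le> 0 ^ n"
proof (induction n)
  case 0 then show ?case by simp
next
  case (Suc n)
  show ?case
  proof (intro allI conjI)
    fix m
    have ih1: "Stirling n (Suc m) + m ^ n \<le> (Suc m) ^ n" using Suc by blast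
    have ih2: "Stirling n m \<le> m ^ n"
    proof (cases m)
      case 0 then show ?thesis using Suc by simp
    next
      case (Suc m') then show ?thesis using \<open>\<forall>m. _\<close> by (metis le_add1 le_trans)
    qed
    have "Suc m * (Stirling n (Suc m) + m ^ n) \<le> Suc m * (Suc m) ^ n" using ih1 by (rule mult_le_mono2)
    then show "Stirling (Suc n) (Suc m) + m ^ Suc n \<le> Suc m ^ Suc n"
      using ih2 by (simp add: algebra_simps)
    show "Stirling (Suc n) 0 \<le> 0 ^ Suc n" by simp
  qed
qed

lemma stirling_le_pow: "Stirling n k \<le> k ^ n"
proof (cases k)
  case 0 then show ?thesis using stirling_aux[of n] by simp
next
  case (Suc m) then show ?thesis using stirling_aux[of n] by (metis le_add1 le_trans)
qed

lemma bell_le: "(\<Sum>i\<le>a. Stirling a i) \<le> Suc a * a ^ a"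
proof -
  have "(\<Sum>i\<le>a. Stirling a i) \<le> (\<Sum>i\<le>a. a ^ a)"
  proof (rule sum_mono)
    fix i assume "i \<in> {..a}"
    then have "i ^ a \<le> a ^ a" by (simp add: power_mono)
    then show "Stirling a i \<le> a ^ a" using stirling_le_pow[of a i] by linarith
  qed
  then show ?thesis by simp
qed

lemma two_pow_lin: "m \<ge> 1 \<Longrightarrow> 2 * (r + m) \<le> (r + 1) * 2 ^ m"
proof (induction m rule: dec_induct)
  case base then show ?case by simp
next
  case (step m)
  have "(1::nat) \<le> 2 ^ m" by simp
  then have "2 \<le> (r + 1) * 2 ^ m" using step(1)
    by (metis Suc_eq_plus1 mult_le_mono one_le_numeral add.commute add_le_mono1 le_add2 mult_1 one_add_one power_increasing power_one_right)
  then show ?case using step by simp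
qed

lemma GL:
  fixes q :: real
  assumes q: "q \<ge> 2 ^ b" and r: "1 \<le> r"
  shows "(\<Sum>j\<in>{r..b}. real (Stirling b j) * q ^ (b - j)) \<le> q ^ (b - r) * (real r ^ b + real b * ((real r + 1) / 2) ^ b)"
proof (cases "r \<le> b")
  case False
  then show ?thesis using q by (simp add: zero_le_mult_iff)
next
  case True
  have q1: "q \<ge> 1" using q by (metis one_le_power one_le_numeral order_trans)
  have "{r..b} = insert r {Suc r..b}" using True by auto
  then have "(\<Sum>j\<in>{r..b}. real (Stirling b j) * q ^ (b - j))
      = real (Stirling b r) * q ^ (b - r) + (\<Sum>j\<in>{Suc r..b}. real (Stirling b j) * q ^ (b - j))"
    by simp
  also have "\<dots> \<le> real r ^ b * q ^ (b - r) + (\<Sum>j\<in>{Suc r..b}. q ^ (b - r) * ((real r + 1) / 2) ^ b)"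
  proof (rule add_mono)
    show "real (Stirling b r) * q ^ (b - r) \<le> real r ^ b * q ^ (b - r)"
      using stirling_le_pow[of b r] q1
      by (intro mult_right_mono) (auto simp: of_nat_le_iff[symmetric] simp del: of_nat_le_iff)
    show "(\<Sum>j\<in>{Suc r..b}. real (Stirling b j) * q ^ (b - j)) \<le> (\<Sum>j\<in>{Suc r..b}. q ^ (b - r) * ((real r + 1) / 2) ^ b)"
    proof (rule sum_mono)
      fix j assume j: "j \<in> {Suc r..b}"
      define m where "m = j - r"
      have m1: "m \<ge> 1" and jrm: "j = r + m" using j m_def by auto
      have "real (2 * (r + m)) \<le> real ((r + 1) * 2 ^ m)" using two_pow_lin[OF m1, of r] by (simp only: of_nat_le_iff)
      then have "2 * real j \<le> (real r + 1) * 2 ^ m" using jrm by (simp add: algebra_simps)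
      then have "real j \<le> 2 ^ m * ((real r + 1) / 2)" by (simp add: field_simps)
      then have "real j ^ b \<le> (2 ^ m * ((real r + 1) / 2)) ^ b" by (rule power_mono) simp
      also have "\<dots> = (2 ^ b) ^ m * ((real r + 1) / 2) ^ b"
        by (simp only: power_mult_distrib flip: power_mult) (simp only: mult.commute)
      also have "\<dots> \<le> q ^ m * ((real r + 1) / 2) ^ b"
        using q by (intro mult_right_mono power_mono) auto
      finally have jb: "real j ^ b \<le> q ^ m * ((real r + 1) / 2) ^ b" .
      have "real (Stirling b j) * q ^ (b - j) \<le> real j ^ b * q ^ (b - j)"
        using stirling_le_pow[of b j] q1
        by (intro mult_right_mono) (auto simp: of_nat_le_iff[symmetric] simp del: of_nat_le_iff)
      also have "\<dots> \<le> q ^ m * ((real r + 1) / 2) ^ b * q ^ (b - j)"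
        using jb q1 by (intro mult_right_mono) auto
      also have "\<dots> = q ^ (b - r) * ((real r + 1) / 2) ^ b"
      proof -
        have "b - r = m + (b - j)" using j jrm by simp
        then show ?thesis by (simp add: power_add)
      qed
      finally show "real (Stirling b j) * q ^ (b - j) \<le> q ^ (b - r) * ((real r + 1) / 2) ^ b" .
    qed
  qed
  also have "\<dots> = q ^ (b - r) * (real r ^ b + real (b - r) * ((real r + 1) / 2) ^ b)"
    by (simp add: algebra_simps)
  also have "\<dots> \<le> q ^ (b - r) * (real r ^ b + real b * ((real r + 1) / 2) ^ b)"
    using q1 by (intro mult_left_mono add_left_mono mult_right_mono) auto
  finally show ?thesis .
qed

definition BB :: "nat \<Rightarrow> real" where "BB a = (\<Sum>i\<le>a. real (Stirling a i))"
definition TT :: "nat \<Rightarrow> nat \<Rightarrow> real" where "TT q b = (\<Sum>j\<le>b. real (Stirling b j) * real q ^ (b - j))"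

lemma PP_BT: "PP q d = (\<Sum>a\<le>d. real (d choose a) * BB a * TT q (d - a))"
  unfolding PP_def BB_def TT_def
  apply (simp add: sum_distrib_left sum_distrib_right mult_ac)
  apply (rule sum.cong[OF refl])
  apply (rule sum.swap)
  done

lemma split_sum: "r \<le> Suc b \<Longrightarrow> (\<Sum>j\<le>b. f j) = (\<Sum>j<r. f j) + (\<Sum>j\<in>{r..b}. f j)"
proof -
  assume r: "r \<le> Suc b"
  have "{..b} = {..<r} \<union> {r..b}" using r by auto
  then show ?thesis by (simp add: sum.union_disjoint ivl_disj_int)
qed

lemma TT_nonneg: "TT q b \<ge> 0" unfolding TT_def by (intro sum_nonneg) auto
lemma BB_nonneg: "BB a \<ge> 0" unfolding BB_def by (intro sum_nonneg) auto

lemma BB_le: "BB a \<le> real (Suc a) * real a ^ a"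
proof -
  have "real (\<Sum>i\<le>a. Stirling a i) \<le> real (Suc a * a ^ a)" using bell_le[of a] by (simp only: of_nat_le_iff)
  then show ?thesis unfolding BB_def by (simp add: algebra_simps)
qed

lemma TT_ge1: "b \<ge> 1 \<Longrightarrow> real q \<ge> 2 ^ b \<Longrightarrow> TT q b \<le> real q ^ (b - 1) * (1 + real b)"
proof -
  assume b: "b \<ge> 1" and q: "real q \<ge> 2 ^ b"
  have "TT q b = (\<Sum>j<1. real (Stirling b j) * real q ^ (b - j)) + (\<Sum>j\<in>{1..b}. real (Stirling b j) * real q ^ (b - j))"
    unfolding TT_def using b by (intro split_sum) simp
  also have "(\<Sum>j<1. real (Stirling b j) * real q ^ (b - j)) = 0" using b by (cases b) auto
  also have "(\<Sum>j\<in>{1..b}. real (Stirling b j) * real q ^ (b - j)) \<le> real q ^ (b - 1) * (real 1 ^ b + real b * ((real 1 + 1) / 2) ^ b)"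
    using GL[OF q, of 1] by simp
  finally show ?thesis by simp
qed

lemma sq_le_pow2: "(d::nat) ^ 2 \<le> 2 * 2 ^ d"
proof (induction d)
  case 0 then show ?case by simp
next
  case (Suc d)
  show ?case
  proof (cases "d < 3")
    case True
    then have "d = 0 \<or> d = 1 \<or> d = 2" by auto
    then show ?thesis by (auto simp: power2_eq_square)
  next
    case False
    then have h: "3 * d \<le> d * d" by (intro mult_right_mono) auto
    have e: "Suc d * Suc d = d * d + 2 * d + 1" by simp
    have "(Suc d) ^ 2 \<le> 2 * d ^ 2" unfolding power2_eq_square using h e False by linarith
    also have "\<dots> \<le> 2 * (2 * 2 ^ d)" using Suc by simp
    finally show ?thesis by simp
  qed
qed

lemma lin_le_pow2: "(d::nat) \<ge> 6 \<Longrightarrow> d \<le> 2 ^ (d - 3)"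
proof (induction d rule: dec_induct)
  case base then show ?case by simp
next
  case (step d)
  have "Suc d - 3 = Suc (d - 3)" using step(1) by simp
  then have "2 ^ (Suc d - 3) = 2 * (2::nat) ^ (d - 3)" by simp
  moreover have "(1::nat) \<le> 2 ^ (d - 3)" by simp
  ultimately show ?case using step by simp
qed

context
  fixes q d :: nat
  assumes d3: "d \<ge> 3" and Q: "real q \<ge> 2 ^ d"
begin

definition "R0 = (\<Sum>j\<in>{3..d}. real (Stirling d j) * real q ^ (d - j))"
definition "R1 = (\<Sum>j\<in>{2..d - 1}. real (Stirling (d - 1) j) * real q ^ (d - 1 - j))"
definition "R2 = (\<Sum>a\<in>{2..d}. real (d choose a) * BB a * TT q (d - a))"

lemma q1: "real q \<ge> 1"
  using Q by (metis one_le_power one_le_numeral order_trans)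

lemma Qb: "b \<le> d \<Longrightarrow> real q \<ge> 2 ^ b"
  using Q by (meson order_trans power_increasing one_le_numeral)

lemma E_decomp:
  "PP q d - real q ^ (d - 1) - real q ^ (d - 2) * (real d + 2 ^ (d - 1) - 1) = R0 + real d * R1 + R2"
proof -
  obtain m where "d = 3 + m" using le_Suc_ex[OF d3] by blast
  then have m: "d = Suc (Suc (Suc m))" by simp
  have s2: "real (Stirling d 2) = 2 ^ (d - 1) - 1"
  proof -
    have "Stirling d 2 = 2 ^ (d - 1) - 1" using Stirling_2[of "Suc (Suc m)"] m by (simp add: numeral_2_eq_2)
    moreover have "(1::nat) \<le> 2 ^ (d - 1)" by simp
    ultimately show ?thesis by (simp add: of_nat_diff)
  qed
  have T0: "TT q d = real q ^ (d - 1) + (2 ^ (d - 1) - 1) * real q ^ (d - 2) + R0"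
  proof -
    have "TT q d = (\<Sum>j<3. real (Stirling d j) * real q ^ (d - j)) + R0"
      unfolding TT_def R0_def using d3 by (intro split_sum) simp
    also have "(\<Sum>j<3. real (Stirling d j) * real q ^ (d - j)) = real q ^ (d - 1) + (2 ^ (d - 1) - 1) * real q ^ (d - 2)"
    proof -
      have s0: "Stirling d 0 = 0" using m by simp
      have s1: "Stirling d (Suc 0) = 1" by (simp only: m Stirling_1)
      have s2': "real (Stirling d (Suc (Suc 0))) = 2 ^ (d - 1) - 1" using s2 by (simp add: numeral_2_eq_2)
      show ?thesis by (simp add: numeral_3_eq_3 s0 s1 s2' numeral_2_eq_2)
    qed
    finally show ?thesis .
  qed
  have T1: "TT q (d - 1) = real q ^ (d - 2) + R1"
  proof -
    have "TT q (d - 1) = (\<Sum>j<2. real (Stirling (d - 1) j) * real q ^ (d - 1 - j)) + R1"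
      unfolding TT_def R1_def using d3 by (intro split_sum) simp
    also have "(\<Sum>j<2. real (Stirling (d - 1) j) * real q ^ (d - 1 - j)) = real q ^ (d - 2)"
    proof -
      have dd: "d - Suc 0 = Suc (Suc m)" using m by simp
      have s0: "Stirling (d - Suc 0) 0 = 0" by (simp only: dd Stirling.simps)
      have s1: "Stirling (d - Suc 0) (Suc 0) = 1" by (simp only: dd Stirling_1)
      show ?thesis by (simp add: numeral_2_eq_2 s0 s1)
    qed
    finally show ?thesis .
  qed
  have "PP q d = (\<Sum>a<2. real (d choose a) * BB a * TT q (d - a)) + R2"
    unfolding PP_BT R2_def using d3 by (intro split_sum) simp
  also have "(\<Sum>a<2. real (d choose a) * BB a * TT q (d - a)) = TT q d + real d * TT q (d - 1)"
    by (simp add: numeral_2_eq_2 BB_def)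
  finally show ?thesis unfolding T0 T1 by (simp add: algebra_simps)
qed

lemma R_nonneg: "R0 \<ge> 0" "R1 \<ge> 0" "R2 \<ge> 0"
  unfolding R0_def R1_def R2_def
  by (auto intro!: sum_nonneg mult_nonneg_nonneg BB_nonneg TT_nonneg)

lemma R0_bound: "R0 \<le> real q ^ (d - 3) * (3 ^ d + real d * 2 ^ d)"
  using GL[OF Q, of 3] unfolding R0_def by simp

lemma R1_bound: "R1 \<le> real q ^ (d - 3) * (2 ^ d + real d * 2 ^ d)"
proof -
  have "R1 \<le> real q ^ (d - 1 - 2) * (real 2 ^ (d - 1) + real (d - 1) * ((real 2 + 1) / 2) ^ (d - 1))"
    unfolding R1_def by (rule GL) (use Qb[of "d - 1"] in auto)
  also have "\<dots> \<le> real q ^ (d - 1 - 2) * (2 ^ d + real d * 2 ^ d)"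
  proof (intro mult_left_mono add_mono mult_mono)
    show "real 2 ^ (d - 1) \<le> 2 ^ d" by (simp add: power_increasing)
    show "real (d - 1) \<le> real d" by simp
    have "((real 2 + 1) / 2) ^ (d - 1) \<le> 2 ^ (d - 1)" by (intro power_mono) auto
    also have "(2::real) ^ (d - 1) \<le> 2 ^ d" by (simp add: power_increasing)
    finally show "((real 2 + 1) / 2) ^ (d - 1) \<le> 2 ^ d" .
  qed (use q1 in auto)
  also have "d - 1 - 2 = d - 3" by simp
  finally show ?thesis .
qed

lemma x1: "real q ^ (d - 3) \<ge> 1" using q1 by simp

lemma R2_term_2: "real (d choose 2) * BB 2 * TT q (d - 2) \<le> real q ^ (d - 3) * (12 * real d ^ 3)"
proof -
  have c: "real (d choose 2) \<le> real d ^ 2"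
  proof -
    have "d choose 2 \<le> d ^ 2" using binomial_le_pow[of 2 d] d3 by simp
    then have "real (d choose 2) \<le> real (d ^ 2)" by (simp only: of_nat_le_iff)
    then show ?thesis by simp
  qed
  have b: "BB 2 \<le> 12" using BB_le[of 2] by simp
  have t: "TT q (d - 2) \<le> real q ^ (d - 3) * real d"
  proof -
    have "TT q (d - 2) \<le> real q ^ (d - 2 - 1) * (1 + real (d - 2))"
      using TT_ge1[of "d - 2" q] d3 Qb[of "d - 2"] by simp
    also have "d - 2 - 1 = d - 3" by simp
    also have "1 + real (d - 2) \<le> real d" using d3 by simp
    finally show ?thesis using q1 by simp
  qed
  have "real (d choose 2) * BB 2 * TT q (d - 2) \<le> real d ^ 2 * 12 * (real q ^ (d - 3) * real d)"
    using c b t by (intro mult_mono) (auto intro!: mult_nonneg_nonneg BB_nonneg TT_nonneg)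
  also have "\<dots> = real q ^ (d - 3) * (12 * real d ^ 3)" by (simp add: power3_eq_cube power2_eq_square)
  finally show ?thesis .
qed

lemma R2_term_mid:
  assumes a: "3 \<le> a" "a < d"
  shows "real (d choose a) * BB a * TT q (d - a) \<le> real q ^ (d - 3) * ((real d + 1) ^ 6 * 2 ^ d)"
proof -
  define b where "b = d - a"
  have b1: "b \<ge> 1" using a b_def by simp
  have c: "real (d choose a) \<le> real d ^ a"
  proof -
    have "d choose a \<le> d ^ a" using binomial_le_pow[of a d] a by simp
    then have "real (d choose a) \<le> real (d ^ a)" by (simp only: of_nat_le_iff)
    then show ?thesis by simp
  qed
  have bb: "BB a \<le> (real d + 1) * real d ^ a"
  proof -
    have "BB a \<le> real (Suc a) * real a ^ a" by (rule BB_le)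
    also have "\<dots> \<le> (real d + 1) * real d ^ a" using a by (intro mult_mono power_mono) auto
    finally show ?thesis .
  qed
  have t: "TT q b \<le> real q ^ (b - 1) * (real d + 1)"
  proof -
    have "TT q b \<le> real q ^ (b - 1) * (1 + real b)" using TT_ge1[OF b1 Qb] b_def by simp
    also have "\<dots> \<le> real q ^ (b - 1) * (real d + 1)" using b_def q1 by (intro mult_left_mono) auto
    finally show ?thesis .
  qed
  have "real (d choose a) * BB a * TT q b \<le> real d ^ a * ((real d + 1) * real d ^ a) * (real q ^ (b - 1) * (real d + 1))"
    using c bb t by (intro mult_mono) (auto intro!: mult_nonneg_nonneg BB_nonneg TT_nonneg)
  also have "\<dots> = (real d + 1) ^ 2 * real d ^ 4 * (real d ^ 2) ^ (a - 2) * real q ^ (b - 1)"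
  proof -
    have "a + a = 4 + 2 * (a - 2)" using a by simp
    then have "real d ^ a * real d ^ a = real d ^ 4 * (real d ^ 2) ^ (a - 2)"
      by (metis power_add power_mult)
    then show ?thesis by (simp add: power2_eq_square algebra_simps)
  qed
  also have "\<dots> \<le> (real d + 1) ^ 2 * real d ^ 4 * (2 ^ d * real q ^ (a - 2)) * real q ^ (b - 1)"
  proof -
    have "real (d ^ 2) \<le> real (2 * 2 ^ d)"
      using sq_le_pow2[of d] by (simp only: of_nat_le_iff)
    then have "real d ^ 2 \<le> 2 * 2 ^ d" by simp
    then have "(real d ^ 2) ^ (a - 2) \<le> (2 * 2 ^ d) ^ (a - 2)" by (intro power_mono) auto
    also have "\<dots> = 2 ^ (a - 2) * (2 ^ d) ^ (a - 2)" by (simp add: power_mult_distrib)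
    also have "\<dots> \<le> 2 ^ d * real q ^ (a - 2)"
      using a Q by (intro mult_mono power_mono power_increasing) auto
    finally have "(real d ^ 2) ^ (a - 2) \<le> 2 ^ d * real q ^ (a - 2)" .
    then show ?thesis using q1 by (intro mult_right_mono mult_left_mono) auto
  qed
  also have "\<dots> = (real d + 1) ^ 2 * real d ^ 4 * 2 ^ d * real q ^ (d - 3)"
  proof -
    have "(a - 2) + (b - 1) = d - 3" using a b_def by simp
    then have "real q ^ (a - 2) * real q ^ (b - 1) = real q ^ (d - 3)" by (metis power_add)
    then show ?thesis by (simp add: algebra_simps)
  qed
  also have "\<dots> \<le> real q ^ (d - 3) * ((real d + 1) ^ 6 * 2 ^ d)"
  proof -
    have "real d ^ 4 \<le> (real d + 1) ^ 4" by (intro power_mono) auto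
    then have "(real d + 1) ^ 2 * real d ^ 4 \<le> (real d + 1) ^ 2 * (real d + 1) ^ 4" by (intro mult_left_mono) auto
    also have "\<dots> = (real d + 1) ^ 6" by (simp flip: power_add)
    finally have "(real d + 1) ^ 2 * real d ^ 4 * 2 ^ d \<le> (real d + 1) ^ 6 * 2 ^ d" by (intro mult_right_mono) auto
    then show ?thesis using q1 by (simp add: mult.commute mult_left_mono)
  qed
  finally show ?thesis unfolding b_def .
qed

lemma R2_term_top: "real (d choose d) * BB d * TT q (d - d) \<le> real q ^ (d - 3) * (real d + 18751)"
proof -
  have t: "TT q 0 = 1" unfolding TT_def by simp
  have "BB d \<le> real q ^ (d - 3) * (real d + 18751)"
  proof (cases "d \<ge> 6")
    case True
    have "real d ^ d \<le> (2 ^ (d - 3)) ^ d"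
      using lin_le_pow2[OF True] by (intro power_mono) (auto simp: of_nat_le_iff[symmetric] simp del: of_nat_le_iff)
    also have "\<dots> = (2 ^ d) ^ (d - 3)" by (simp flip: power_mult add: mult.commute)
    also have "\<dots> \<le> real q ^ (d - 3)" using Q by (intro power_mono) auto
    finally have dd: "real d ^ d \<le> real q ^ (d - 3)" .
    have "BB d \<le> (real d + 1) * real d ^ d" using BB_le[of d] by (simp add: add.commute)
    also have "\<dots> \<le> (real d + 1) * real q ^ (d - 3)" using dd by (intro mult_left_mono) auto
    also have "\<dots> \<le> real q ^ (d - 3) * (real d + 18751)" using x1 by (simp add: algebra_simps)
    finally show ?thesis .
  next
    case False
    have "BB d \<le> (real d + 1) * real d ^ d" using BB_le[of d] by (simp add: add.commute)
    also have "\<dots> \<le> 6 * 5 ^ 5"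
    proof -
      have "real d ^ d \<le> 5 ^ d" using False by (intro power_mono) auto
      also have "(5::real) ^ d \<le> 5 ^ 5" using False by (intro power_increasing) auto
      finally have "real d ^ d \<le> 5 ^ 5" .
      moreover have "real d + 1 \<le> 6" using False by simp
      ultimately show ?thesis by (intro mult_mono) auto
    qed
    also have "\<dots> \<le> real q ^ (d - 3) * (real d + 18751)"
    proof -
      have "(6::real) * 5 ^ 5 \<le> 1 * (real d + 18751)" by simp
      also have "\<dots> \<le> real q ^ (d - 3) * (real d + 18751)" using x1 by (intro mult_right_mono) auto
      finally show ?thesis .
    qed
    finally show ?thesis .
  qed
  then show ?thesis using t by simp
qed

lemma R2_term:
  assumes a: "a \<in> {2..d}"
  shows "real (d choose a) * BB a * TT q (d - a) \<le> real q ^ (d - 3) * (18764 * (real d + 1) ^ 6 * 2 ^ d)"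
proof -
  have y1: "(1::real) \<le> (real d + 1) ^ 6" by simp
  have p1: "(1::real) \<le> 2 ^ d" by simp
  have H1: "(real d + 1) ^ 6 * 2 ^ d \<ge> 1" using mult_mono[OF y1 p1] by simp
  consider "a = 2" | "3 \<le> a \<and> a < d" | "a = d" using a by fastforce
  then show ?thesis
  proof cases
    case 1
    have "12 * real d ^ 3 \<le> 12 * ((real d + 1) ^ 6 * 2 ^ d)"
    proof -
      have "real d ^ 3 \<le> (real d + 1) ^ 3" by (intro power_mono) auto
      also have "\<dots> \<le> (real d + 1) ^ 6" by (intro power_increasing) auto
      also have "\<dots> \<le> (real d + 1) ^ 6 * 2 ^ d" using p1 by simp
      finally show ?thesis by simp
    qed
    also have "\<dots> \<le> 18764 * (real d + 1) ^ 6 * 2 ^ d" by simp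
    finally have "12 * real d ^ 3 \<le> 18764 * (real d + 1) ^ 6 * 2 ^ d" .
    then show ?thesis using R2_term_2 1 x1
      by (meson mult_left_mono order_trans zero_le_one order.trans[OF zero_le_one x1])
  next
    case 2
    have "(real d + 1) ^ 6 * 2 ^ d \<le> 18764 * (real d + 1) ^ 6 * 2 ^ d" by simp
    then show ?thesis using R2_term_mid[of a] 2 x1
      by (meson mult_left_mono order_trans order.trans[OF zero_le_one x1])
  next
    case 3
    have "real d + 18751 \<le> 18752 * ((real d + 1) ^ 6 * 2 ^ d)"
    proof -
      have "real d \<le> (real d + 1) ^ 6 * 2 ^ d"
      proof -
        have "real d \<le> (real d + 1) ^ 1" by simp
        also have "\<dots> \<le> (real d + 1) ^ 6" by (intro power_increasing) auto
        also have "\<dots> \<le> (real d + 1) ^ 6 * 2 ^ d" using p1 by simp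
        finally show ?thesis .
      qed
      then show ?thesis using H1 by simp
    qed
    also have "\<dots> \<le> 18764 * (real d + 1) ^ 6 * 2 ^ d" by simp
    finally have "real d + 18751 \<le> 18764 * (real d + 1) ^ 6 * 2 ^ d" .
    then show ?thesis using R2_term_top 3 x1
      by (meson mult_left_mono order_trans order.trans[OF zero_le_one x1])
  qed
qed

lemma E_bound:
  "PP q d - real q ^ (d - 1) - real q ^ (d - 2) * (real d + 2 ^ (d - 1) - 1) \<ge> 0"
  "PP q d - real q ^ (d - 1) - real q ^ (d - 2) * (real d + 2 ^ (d - 1) - 1)
     \<le> real q ^ (d - 3) * (3 ^ d + 18800 * (real d + 1) ^ 7 * 2 ^ d)"
proof -
  show "PP q d - real q ^ (d - 1) - real q ^ (d - 2) * (real d + 2 ^ (d - 1) - 1) \<ge> 0"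
    unfolding E_decomp using R_nonneg by simp
  define x where "x = real q ^ (d - 3)"
  define y where "y = real d + 1"
  have xpos: "x \<ge> 0" using x1 x_def by simp
  have R2b: "R2 \<le> real d * (x * (18764 * y ^ 6 * 2 ^ d))"
  proof -
    have "R2 \<le> (\<Sum>a\<in>{2..d}. x * (18764 * y ^ 6 * 2 ^ d))"
      unfolding R2_def x_def y_def by (rule sum_mono) (rule R2_term)
    also have "\<dots> = real (d - 1) * (x * (18764 * y ^ 6 * 2 ^ d))" using d3 by simp
    also have "\<dots> \<le> real d * (x * (18764 * y ^ 6 * 2 ^ d))"
      using xpos by (intro mult_right_mono) (auto simp: y_def)
    finally show ?thesis .
  qed
  have "R0 + real d * R1 + R2 \<le> x * (3 ^ d + real d * 2 ^ d) + real d * (x * (2 ^ d + real d * 2 ^ d))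
      + real d * (x * (18764 * y ^ 6 * 2 ^ d))"
    using R0_bound R1_bound R2b unfolding x_def by (intro add_mono mult_left_mono) auto
  also have "\<dots> = x * (3 ^ d + (2 * real d + real d ^ 2 + 18764 * real d * y ^ 6) * 2 ^ d)"
    by (simp add: algebra_simps power2_eq_square)
  also have "\<dots> \<le> x * (3 ^ d + 18800 * y ^ 7 * 2 ^ d)"
  proof -
    have d1: "real d \<le> y" unfolding y_def by simp
    have y1: "1 \<le> y" unfolding y_def by simp
    have "real d \<le> y ^ 7"
    proof -
      have "y ^ 1 \<le> y ^ 7" using y1 by (intro power_increasing) auto
      then show ?thesis using d1 by simp
    qed
    moreover have "real d ^ 2 \<le> y ^ 7"
    proof -
      have "real d ^ 2 \<le> y ^ 2" using d1 by (intro power_mono) auto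
      also have "\<dots> \<le> y ^ 7" using y1 by (intro power_increasing) auto
      finally show ?thesis .
    qed
    moreover have "real d * y ^ 6 \<le> y ^ 7"
    proof -
      have "real d * y ^ 6 \<le> y * y ^ 6" using d1 y1 by (intro mult_right_mono) auto
      then show ?thesis by (simp add: power_Suc[symmetric] del: power_Suc)
    qed
    ultimately have "2 * real d + real d ^ 2 + 18764 * real d * y ^ 6 \<le> 18800 * y ^ 7" by linarith
    then show ?thesis using xpos by (intro mult_left_mono add_left_mono mult_right_mono) auto
  qed
  finally show "PP q d - real q ^ (d - 1) - real q ^ (d - 2) * (real d + 2 ^ (d - 1) - 1)
     \<le> real q ^ (d - 3) * (3 ^ d + 18800 * (real d + 1) ^ 7 * 2 ^ d)"
    unfolding E_decomp x_def y_def .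
qed

end

lemma K_exists: "\<exists>K>0. \<forall>d::nat. (real d + 1) ^ 7 * 2 ^ d \<le> K * 3 ^ d"
proof -
  have "(\<lambda>d::nat. (real d + 1) ^ 7 * 2 ^ d / 3 ^ d) \<longlonglongrightarrow> 0" by real_asymp
  then have "Bseq (\<lambda>d::nat. (real d + 1) ^ 7 * 2 ^ d / 3 ^ d)" by (rule convergent_imp_Bseq[OF convergentI])
  then obtain K where K: "K > 0" "\<And>d. norm ((real d + 1) ^ 7 * 2 ^ d / 3 ^ d) \<le> K"
    unfolding Bseq_def by blast
  have "(real d + 1) ^ 7 * 2 ^ d \<le> K * 3 ^ d" for d :: nat
  proof -
    have "(real d + 1) ^ 7 * 2 ^ d / 3 ^ d \<le> K" using K(2)[of d] by simp
    then show ?thesis by (simp add: field_simps)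
  qed
  then show ?thesis using K(1) by blast
qed

lemma sigma_prime:
  assumes q: "prime q"
  shows "sigma a q = 1 + real q powr a"
proof -
  have "{d. d dvd q} = {1, q}" using q unfolding prime_nat_iff by auto
  moreover have "q \<noteq> 1" using q by auto
  ultimately show ?thesis unfolding sigma_def by simp
qed

lemma PP1: "PP q 1 = 2"
  unfolding PP_def by (simp add: numeral_2_eq_2)

lemma PP2: "PP q 2 = real q + 5"
  unfolding PP_def by (simp add: numeral_2_eq_2 numeral_3_eq_3)

theorem lemma5p2:
  "\<exists>C::real. C > 0 \<and>
     (\<forall>q \<delta> n :: nat. prime q \<and> \<delta> > 0 \<and> real \<delta> \<le> ln (real q) / ln 2 \<and> n \<ge> \<delta> * q \<longrightarrow>
        (\<delta> = 1 \<longrightarrow> momentA n q \<delta> = sigma 0 q) \<and>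
        (\<delta> = 2 \<longrightarrow> momentA n q \<delta> = sigma 1 q + (sigma 0 q)^2) \<and>
        (\<delta> \<ge> 3 \<longrightarrow>
           \<bar>momentA n q \<delta> - sigma (real \<delta> - 1) q
              - real q ^ (\<delta> - 2) * (real \<delta> + 2 ^ (\<delta> - 1) - 1)\<bar>
           \<le> C * 3 ^ \<delta> * real q ^ (\<delta> - 3)))"
proof -
  obtain K where K: "K > 0" "\<And>d::nat. (real d + 1) ^ 7 * 2 ^ d \<le> K * 3 ^ d" using K_exists by blast
  define C where "C = 2 + 18800 * K"
  have Cpos: "C > 0" using K(1) C_def by simp
  show ?thesis
  proof (rule exI[of _ C], rule conjI[OF Cpos], intro allI impI)
    fix q \<delta> n :: nat
    assume H: "prime q \<and> \<delta> > 0 \<and> real \<delta> \<le> ln (real q) / ln 2 \<and> n \<ge> \<delta> * q"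
    then have q: "prime q" and n: "\<delta> * q \<le> n" and dl: "real \<delta> \<le> ln (real q) / ln 2" by auto
    have qpos: "real q > 0" using q prime_gt_0_nat by simp
    have mom: "momentA n q \<delta> = PP q \<delta>" using moment_eq[OF q n] .
    have s0: "sigma 0 q = 2" using sigma_prime[OF q, of 0] qpos by simp
    have s1: "sigma 1 q = 1 + real q" using sigma_prime[OF q, of 1] qpos by simp
    show "(\<delta> = 1 \<longrightarrow> momentA n q \<delta> = sigma 0 q) \<and>
        (\<delta> = 2 \<longrightarrow> momentA n q \<delta> = sigma 1 q + (sigma 0 q)^2) \<and>
        (\<delta> \<ge> 3 \<longrightarrow>
           \<bar>momentA n q \<delta> - sigma (real \<delta> - 1) q
              - real q ^ (\<delta> - 2) * (real \<delta> + 2 ^ (\<delta> - 1) - 1)\<bar>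
           \<le> C * 3 ^ \<delta> * real q ^ (\<delta> - 3))"
    proof (intro conjI)
    show "\<delta> = 1 \<longrightarrow> momentA n q \<delta> = sigma 0 q"
    proof
      assume "\<delta> = 1" then show "momentA n q \<delta> = sigma 0 q" using mom PP1[of q] s0 by simp
    qed
    show "\<delta> = 2 \<longrightarrow> momentA n q \<delta> = sigma 1 q + (sigma 0 q)^2"
    proof
      assume "\<delta> = 2" then show "momentA n q \<delta> = sigma 1 q + (sigma 0 q)^2" using mom PP2[of q] s0 s1 by simp
    qed
    show "\<delta> \<ge> 3 \<longrightarrow> \<bar>momentA n q \<delta> - sigma (real \<delta> - 1) q
              - real q ^ (\<delta> - 2) * (real \<delta> + 2 ^ (\<delta> - 1) - 1)\<bar>
           \<le> C * 3 ^ \<delta> * real q ^ (\<delta> - 3)"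
    proof
      assume d3: "\<delta> \<ge> 3"
      have Q: "real q \<ge> 2 ^ \<delta>"
      proof -
        have "real \<delta> * ln 2 \<le> ln (real q)" using dl by (simp add: field_simps)
        then have "ln (2 ^ \<delta>) \<le> ln (real q)" by (simp add: ln_realpow)
        then show ?thesis using qpos by simp
      qed
      have sd: "sigma (real \<delta> - 1) q = 1 + real q ^ (\<delta> - 1)"
      proof -
        have e: "real \<delta> - 1 = real (\<delta> - 1)" using d3 by simp
        have "real q powr (real \<delta> - 1) = real q powr real (\<delta> - 1)" by (simp only: e)
        also have "\<dots> = real q ^ (\<delta> - 1)" by (rule powr_realpow[OF qpos])
        finally show ?thesis using sigma_prime[OF q, of "real \<delta> - 1"] by simp
      qed
      define E where "E = PP q \<delta> - real q ^ (\<delta> - 1) - real q ^ (\<delta> - 2) * (real \<delta> + 2 ^ (\<delta> - 1) - 1)"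
      define x where "x = real q ^ (\<delta> - 3)"
      have E0: "E \<ge> 0" using E_bound(1)[OF d3 Q] unfolding E_def .
      have E1: "E \<le> x * (3 ^ \<delta> + 18800 * (real \<delta> + 1) ^ 7 * 2 ^ \<delta>)" using E_bound(2)[OF d3 Q] unfolding E_def x_def .
      have x1: "x \<ge> 1" using x1[OF d3 Q] unfolding x_def .
      have "\<bar>momentA n q \<delta> - sigma (real \<delta> - 1) q - real q ^ (\<delta> - 2) * (real \<delta> + 2 ^ (\<delta> - 1) - 1)\<bar> = \<bar>E - 1\<bar>"
        unfolding mom sd E_def by (simp add: algebra_simps)
      also have "\<dots> \<le> E + 1" using E0 by simp
      also have "\<dots> \<le> x * (3 ^ \<delta> + 18800 * (real \<delta> + 1) ^ 7 * 2 ^ \<delta>) + x" using E1 x1 by simp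
      also have "\<dots> \<le> x * (3 ^ \<delta> + 18800 * (K * 3 ^ \<delta>)) + x * 3 ^ \<delta>"
      proof -
        have "x * (3 ^ \<delta> + 18800 * (real \<delta> + 1) ^ 7 * 2 ^ \<delta>) \<le> x * (3 ^ \<delta> + 18800 * (K * 3 ^ \<delta>))"
          using K(2)[of \<delta>] x1 by (intro mult_left_mono) auto
        moreover have "x \<le> x * 3 ^ \<delta>" using x1 by simp
        ultimately show ?thesis by simp
      qed
      also have "\<dots> = C * 3 ^ \<delta> * x" unfolding C_def by (simp add: algebra_simps)
      finally show "\<bar>momentA n q \<delta> - sigma (real \<delta> - 1) q
              - real q ^ (\<delta> - 2) * (real \<delta> + 2 ^ (\<delta> - 1) - 1)\<bar>
           \<le> C * 3 ^ \<delta> * real q ^ (\<delta> - 3)" unfolding x_def .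
    qed
    qed
  qed
qed

end
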